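(* Under the hypotheses of Lemma 2.2, let $\varphi(U)=\phi(U)-\phi(I)U+[T,U]$ with $T=P_1\phi(P_1)P_2+P_2\phi(P_2)P_1$. Then for all $U_{ij},V_{ij}\in\mathcal{U}_{ij}$ ($i,j=1,2$): (1) $\varphi(U_{11}\circ V_{12})=\varphi(U_{11})\circ V_{12}+U_{11}\circ\varphi(V_{12})$; (2) $\varphi(U_{22}\circ V_{21})=\varphi(U_{22})\circ V_{21}+U_{22}\circ\varphi(V_{21})$; (3) $\varphi(U_{11}\circ V_{21})=\varphi(U_{11})\circ V_{21}+U_{11}\circ\varphi(V_{21})$; (4) $\varphi(U_{22}\circ V_{12})=\varphi(U_{22})\circ V_{12}+U_{22}\circ\varphi(V_{12})$; (5) $\varphi(U_{11}\circ V_{11})=\varphi(U_{11})\circ V_{11}+U_{11}\circ\varphi(V_{11})$; (6) $\varphi(U_{22}\circ V_{22})=\varphi(U_{22})\circ V_{22}+U_{22}\circ\varphi(V_{22})$; (7) $\varphi(U_{12}\circ V_{21})=\varphi(U_{12})\circ V_{21}+U_{12}\circ\varphi(V_{21})$; (8) $\varphi(U_{21}\circ V_{12})=\varphi(U_{21})\circ V_{12}+U_{21}\circ\varphi(V_{12})$.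
   Context: $\mathcal{U}=\begin{pmatrix}\mathcal{A}&\mathcal{M}\\ \mathcal{N}&\mathcal{B}\end{pmatrix}$ is a generalized matrix ring: $\mathcal{A},\mathcal{B}$ unital 2-torsion free rings, $\mathcal{M}$ a unital $(\mathcal{A},\mathcal{B})$-bimodule faithful on both sides (if $A\mathcal{M}=\{0\}$ then $A=0$; if $\mathcal{M}B=\{0\}$ then $B=0$), $\mathcal{N}$ a unital $(\mathcal{B},\mathcal{A})$-bimodule, with bimodule pairings $MN\in\mathcal{A}$, $NM\in\mathcal{B}$ satisfying $(MN)M'=M(NM')$, $(NM)N'=N(MN')$; $\mathcal{U}$ consists of $2\times2$ matrices with usual matrix operations and identity $I$. The hypotheses of Lemma 2.2: $\phi:\mathcal{U}\to\mathcal{U}$ is additive and $\phi(U)\circ V+U\circ\phi(V)=0$ whenever $UV=VU=0$. $X\circ Y=XY+YX$, $[X,Y]=XY-YX$. $P_1=\mathrm{diag}(I_{\mathcal{A}},0)$, $P_2=\mathrm{diag}(0,I_{\mathcal{B}})$, and $\mathcal{U}_{ij}=P_i\mathcal{U}P_j$. *)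

theory Defs
  imports Main
begin

text \<open>Elements of the generalized matrix ring U = [[A, M], [N, B]] as 2x2 arrays.\<close>
datatype ('a, 'm, 'n, 'b) gm = GM (g11: 'a) (g12: 'm) (g21: 'n) (g22: 'b)

instantiation gm :: (ab_group_add, ab_group_add, ab_group_add, ab_group_add) ab_group_add
begin
definition zero_gm_def: "0 = GM 0 0 0 0"
definition plus_gm_def: "X + Y = GM (g11 X + g11 Y) (g12 X + g12 Y) (g21 X + g21 Y) (g22 X + g22 Y)"
definition uminus_gm_def: "- X = GM (- g11 X) (- g12 X) (- g21 X) (- g22 X)"
definition minus_gm_def: "X - Y = GM (g11 X - g11 Y) (g12 X - g12 Y) (g21 X - g21 Y) (g22 X - g22 Y)"
instance
  by standard (simp_all add: zero_gm_def plus_gm_def uminus_gm_def minus_gm_def algebra_simps)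
end

record ('a, 'b, 'm, 'n) gmr_ops =
  lA  :: "'a \<Rightarrow> 'm \<Rightarrow> 'm"
  rB  :: "'m \<Rightarrow> 'b \<Rightarrow> 'm"
  lB  :: "'b \<Rightarrow> 'n \<Rightarrow> 'n"
  rA  :: "'n \<Rightarrow> 'a \<Rightarrow> 'n"
  pMN :: "'m \<Rightarrow> 'n \<Rightarrow> 'a"
  pNM :: "'n \<Rightarrow> 'm \<Rightarrow> 'b"

definition gen_matrix_ring :: "('a::ring_1, 'b::ring_1, 'm::ab_group_add, 'n::ab_group_add) gmr_ops \<Rightarrow> bool" where
  "gen_matrix_ring G \<longleftrightarrow>
    (\<forall>a a' m. lA G (a + a') m = lA G a m + lA G a' m) \<and>
    (\<forall>a m m'. lA G a (m + m') = lA G a m + lA G a m') \<and>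
    (\<forall>a a' m. lA G (a * a') m = lA G a (lA G a' m)) \<and>
    (\<forall>m. lA G 1 m = m) \<and>
    (\<forall>m b b'. rB G m (b + b') = rB G m b + rB G m b') \<and>
    (\<forall>m m' b. rB G (m + m') b = rB G m b + rB G m' b) \<and>
    (\<forall>m b b'. rB G m (b * b') = rB G (rB G m b) b') \<and>
    (\<forall>m. rB G m 1 = m) \<and>
    (\<forall>a m b. lA G a (rB G m b) = rB G (lA G a m) b) \<and>
    (\<forall>b b' n. lB G (b + b') n = lB G b n + lB G b' n) \<and>
    (\<forall>b n n'. lB G b (n + n') = lB G b n + lB G b n') \<and>
    (\<forall>b b' n. lB G (b * b') n = lB G b (lB G b' n)) \<and>
    (\<forall>n. lB G 1 n = n) \<and>
    (\<forall>n a a'. rA G n (a + a') = rA G n a + rA G n a') \<and>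
    (\<forall>n n' a. rA G (n + n') a = rA G n a + rA G n' a) \<and>
    (\<forall>n a a'. rA G n (a * a') = rA G (rA G n a) a') \<and>
    (\<forall>n. rA G n 1 = n) \<and>
    (\<forall>b n a. lB G b (rA G n a) = rA G (lB G b n) a) \<and>
    (\<forall>m m' n. pMN G (m + m') n = pMN G m n + pMN G m' n) \<and>
    (\<forall>m n n'. pMN G m (n + n') = pMN G m n + pMN G m n') \<and>
    (\<forall>a m n. pMN G (lA G a m) n = a * pMN G m n) \<and>
    (\<forall>m n a. pMN G m (rA G n a) = pMN G m n * a) \<and>
    (\<forall>m b n. pMN G (rB G m b) n = pMN G m (lB G b n)) \<and>
    (\<forall>n n' m. pNM G (n + n') m = pNM G n m + pNM G n' m) \<and>
    (\<forall>n m m'. pNM G n (m + m') = pNM G n m + pNM G n m') \<and>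
    (\<forall>b n m. pNM G (lB G b n) m = b * pNM G n m) \<and>
    (\<forall>n m b. pNM G n (rB G m b) = pNM G n m * b) \<and>
    (\<forall>n a m. pNM G (rA G n a) m = pNM G n (lA G a m)) \<and>
    (\<forall>m n m'. lA G (pMN G m n) m' = rB G m (pNM G n m')) \<and>
    (\<forall>n m n'. lB G (pNM G n m) n' = rA G n (pMN G m n'))"

definition faithful_M :: "('a::ring_1, 'b::ring_1, 'm::ab_group_add, 'n::ab_group_add) gmr_ops \<Rightarrow> bool" where
  "faithful_M G \<longleftrightarrow>
    (\<forall>a. (\<forall>m. lA G a m = 0) \<longrightarrow> a = 0) \<and>
    (\<forall>b. (\<forall>m. rB G m b = 0) \<longrightarrow> b = 0)"

definition two_torsion_free :: "'a::ab_group_add itself \<Rightarrow> bool" where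
  "two_torsion_free _ \<longleftrightarrow> (\<forall>x::'a. x + x = 0 \<longrightarrow> x = 0)"

definition gmul :: "('a::ring_1, 'b::ring_1, 'm::ab_group_add, 'n::ab_group_add) gmr_ops
    \<Rightarrow> ('a, 'm, 'n, 'b) gm \<Rightarrow> ('a, 'm, 'n, 'b) gm \<Rightarrow> ('a, 'm, 'n, 'b) gm" where
  "gmul G X Y = GM
     (g11 X * g11 Y + pMN G (g12 X) (g21 Y))
     (lA G (g11 X) (g12 Y) + rB G (g12 X) (g22 Y))
     (rA G (g21 X) (g11 Y) + lB G (g22 X) (g21 Y))
     (pNM G (g21 X) (g12 Y) + g22 X * g22 Y)"

definition gI :: "('a::ring_1, 'm::ab_group_add, 'n::ab_group_add, 'b::ring_1) gm" where
  "gI = GM 1 0 0 1"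
definition gP1 :: "('a::ring_1, 'm::ab_group_add, 'n::ab_group_add, 'b::ring_1) gm" where
  "gP1 = GM 1 0 0 0"
definition gP2 :: "('a::ring_1, 'm::ab_group_add, 'n::ab_group_add, 'b::ring_1) gm" where
  "gP2 = GM 0 0 0 1"

definition jprod where "jprod G X Y = gmul G X Y + gmul G Y X"
definition gcomm where "gcomm G X Y = gmul G X Y - gmul G Y X"

definition corner where "corner G P Q = {gmul G (gmul G P X) Q | X. True}"

end

theory Submission
  imports Defs
begin



lemma add_hom:
  fixes f :: "'a::ab_group_add \<Rightarrow> 'b::ab_group_add"
  assumes "\<forall>x y. f (x + y) = f x + f y"
  shows "f 0 = (0::'b::ab_group_add)" "f (- x) = - f x" "f (x - y) = f x - f y"
proof -
  have "f (0 + 0) = f 0 + f 0" using assms by blast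
  then show z: "f 0 = 0" by simp
  have m: "f (- u) = - f u" for u
  proof -
    have "f (u + - u) = f u + f (- u)" using assms by blast
    then show ?thesis using z by (simp add: eq_neg_iff_add_eq_0 add.commute)
  qed
  then show "f (- x) = - f x" .
  have "f (x + - y) = f x + f (- y)" using assms by blast
  then show "f (x - y) = f x - f y" using m by simp
qed

lemma gm_eq: "X = Y \<longleftrightarrow> g11 X = g11 Y \<and> g12 X = g12 Y \<and> g21 X = g21 Y \<and> g22 X = g22 Y"
  by (cases X; cases Y) auto

lemma gm_comps[simp]:
  "g11 (X + Y) = g11 X + g11 Y" "g12 (X + Y) = g12 X + g12 Y"
  "g21 (X + Y) = g21 X + g21 Y" "g22 (X + Y) = g22 X + g22 Y"
  "g11 (X - Y) = g11 X - g11 Y" "g12 (X - Y) = g12 X - g12 Y"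
  "g21 (X - Y) = g21 X - g21 Y" "g22 (X - Y) = g22 X - g22 Y"
  "g11 (- X) = - g11 X" "g12 (- X) = - g12 X" "g21 (- X) = - g21 X" "g22 (- X) = - g22 X"
  "g11 0 = 0" "g12 0 = 0" "g21 0 = 0" "g22 0 = 0"
  by (simp_all add: plus_gm_def minus_gm_def uminus_gm_def zero_gm_def)

locale L =
  fixes G :: "('a::ring_1, 'b::ring_1, 'm::ab_group_add, 'n::ab_group_add) gmr_ops"
  assumes gmr: "gen_matrix_ring G"
begin

lemma ax:
  "lA G (a + a') m = lA G a m + lA G a' m"
  "lA G a (m + m') = lA G a m + lA G a m'"
  "lA G (a * a') m = lA G a (lA G a' m)"
  "lA G 1 m = m"
  "rB G m (b + b') = rB G m b + rB G m b'"
  "rB G (m + m') b = rB G m b + rB G m' b"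
  "rB G m (b * b') = rB G (rB G m b) b'"
  "rB G m 1 = m"
  "lA G a (rB G m b) = rB G (lA G a m) b"
  "lB G (b + b') n = lB G b n + lB G b' n"
  "lB G b (n + n') = lB G b n + lB G b n'"
  "lB G (b * b') n = lB G b (lB G b' n)"
  "lB G 1 n = n"
  "rA G n (a + a') = rA G n a + rA G n a'"
  "rA G (n + n') a = rA G n a + rA G n' a"
  "rA G n (a * a') = rA G (rA G n a) a'"
  "rA G n 1 = n"
  "lB G b (rA G n a) = rA G (lB G b n) a"
  "pMN G (m + m') n = pMN G m n + pMN G m' n"
  "pMN G m (n + n') = pMN G m n + pMN G m n'"
  "pMN G (lA G a m) n = a * pMN G m n"
  "pMN G m (rA G n a) = pMN G m n * a"
  "pMN G (rB G m b) n = pMN G m (lB G b n)"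
  "pNM G (n + n') m = pNM G n m + pNM G n' m"
  "pNM G n (m + m') = pNM G n m + pNM G n m'"
  "pNM G (lB G b n) m = b * pNM G n m"
  "pNM G n (rB G m b) = pNM G n m * b"
  "pNM G (rA G n a) m = pNM G n (lA G a m)"
  "lA G (pMN G m n) m' = rB G m (pNM G n m')"
  "lB G (pNM G n m) n' = rA G n (pMN G m n')"
  by (simp_all add: gmr[unfolded gen_matrix_ring_def])

lemmas axs[simp] = ax

lemma der[simp]:
  "lA G 0 m = 0" "lA G (- a) m = - lA G a m" "lA G (a - a') m = lA G a m - lA G a' m"
  "lA G a 0 = 0" "lA G a (- m) = - lA G a m" "lA G a (m - m') = lA G a m - lA G a m'"
  "rB G 0 b = 0" "rB G (- m) b = - rB G m b" "rB G (m - m') b = rB G m b - rB G m' b"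
  "rB G m 0 = 0" "rB G m (- b) = - rB G m b" "rB G m (b - b') = rB G m b - rB G m b'"
  "lB G 0 n = 0" "lB G (- b) n = - lB G b n" "lB G (b - b') n = lB G b n - lB G b' n"
  "lB G b 0 = 0" "lB G b (- n) = - lB G b n" "lB G b (n - n') = lB G b n - lB G b n'"
  "rA G 0 a = 0" "rA G (- n) a = - rA G n a" "rA G (n - n') a = rA G n a - rA G n' a"
  "rA G n 0 = 0" "rA G n (- a) = - rA G n a" "rA G n (a - a') = rA G n a - rA G n a'"
  "pMN G 0 n = 0" "pMN G (- m) n = - pMN G m n" "pMN G (m - m') n = pMN G m n - pMN G m' n"
  "pMN G m 0 = 0" "pMN G m (- n) = - pMN G m n" "pMN G m (n - n') = pMN G m n - pMN G m n'"
  "pNM G 0 m = 0" "pNM G (- n) m = - pNM G n m" "pNM G (n - n') m = pNM G n m - pNM G n' m"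
  "pNM G n 0 = 0" "pNM G n (- m) = - pNM G n m" "pNM G n (m - m') = pNM G n m - pNM G n m'"
  by (rule add_hom; simp)+


lemma gmul_assoc: "gmul G (gmul G X Y) Z = gmul G X (gmul G Y Z)"
  by (simp add: gm_eq gmul_def distrib_left distrib_right mult.assoc add_ac)

lemma gmul_dist:
  "gmul G (X + Y) Z = gmul G X Z + gmul G Y Z"
  "gmul G X (Y + Z) = gmul G X Y + gmul G X Z"
  "gmul G (X - Y) Z = gmul G X Z - gmul G Y Z"
  "gmul G X (Y - Z) = gmul G X Y - gmul G X Z"
  "gmul G 0 Z = 0" "gmul G X 0 = 0"
  "gmul G (- X) Z = - gmul G X Z" "gmul G X (- Z) = - gmul G X Z"
  by (simp_all add: gm_eq gmul_def distrib_left distrib_right left_diff_distrib right_diff_distrib add_ac diff_add_eq)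

lemma jprod_dist:
  "jprod G (X + Y) Z = jprod G X Z + jprod G Y Z"
  "jprod G X (Y + Z) = jprod G X Y + jprod G X Z"
  "jprod G (X - Y) Z = jprod G X Z - jprod G Y Z"
  "jprod G X (Y - Z) = jprod G X Y - jprod G X Z"
  "jprod G 0 Z = 0" "jprod G X 0 = 0"
  "jprod G (- X) Z = - jprod G X Z" "jprod G X (- Z) = - jprod G X Z"
  by (simp_all add: jprod_def gmul_dist algebra_simps)

end

locale L2 = L G for G :: "('a::ring_1, 'b::ring_1, 'm::ab_group_add, 'n::ab_group_add) gmr_ops" +
  fixes phi :: "('a, 'm, 'n, 'b) gm \<Rightarrow> ('a, 'm, 'n, 'b) gm"
    and T :: "('a, 'm, 'n, 'b) gm"
    and vphi :: "('a, 'm, 'n, 'b) gm \<Rightarrow> ('a, 'm, 'n, 'b) gm"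
  assumes faithful: "faithful_M G"
    and torA: "two_torsion_free TYPE('a)"
    and torB: "two_torsion_free TYPE('b)"
    and additive: "\<forall>X Y. phi (X + Y) = phi X + phi Y"
    and zp: "\<forall>U V. gmul G U V = 0 \<and> gmul G V U = 0 \<longrightarrow>
                 jprod G (phi U) V + jprod G U (phi V) = 0"
    and T_def: "T = gmul G (gmul G gP1 (phi gP1)) gP2 + gmul G (gmul G gP2 (phi gP2)) gP1"
    and vphi_def: "\<forall>U. vphi U = phi U - gmul G (phi gI) U + gcomm G T U"
begin

lemma phi_hom: "phi 0 = 0" "phi (- X) = - phi X" "phi (X - Y) = phi X - phi Y" "phi (X + Y) = phi X + phi Y"
  using add_hom[OF additive] additive by auto

lemma zpI: "gmul G U V = 0 \<Longrightarrow> gmul G V U = 0 \<Longrightarrow> jprod G (phi U) V + jprod G U (phi V) = 0"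
  using zp by blast

lemma torA': "x + x = (0::'a) \<Longrightarrow> x = 0" using torA unfolding two_torsion_free_def by blast
lemma torB': "x + x = (0::'b) \<Longrightarrow> x = 0" using torB unfolding two_torsion_free_def by blast

end


context L2 begin

abbreviation "PA a \<equiv> phi (GM a 0 0 0)"
abbreviation "PM m \<equiv> phi (GM 0 m 0 0)"
abbreviation "PN n \<equiv> phi (GM 0 0 n 0)"
abbreviation "PB b \<equiv> phi (GM 0 0 0 b)"

definition "c1 = g11 (PA 1)"
definition "m0 = g12 (PA 1)"
definition "n0 = g21 (PB 1)"
definition "c2 = g22 (PB 1)"

lemma s1:
  "a * g11 (PB b) + g11 (PB b) * a = 0"
  "g22 (PA a) * b + b * g22 (PA a) = 0"
  "rB G (g12 (PA a)) b + lA G a (g12 (PB b)) = 0"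
  "lB G b (g21 (PA a)) + rA G (g21 (PB b)) a = 0"
proof -
  have e: "jprod G (PA a) (GM 0 0 0 b) + jprod G (GM a 0 0 0) (PB b) = 0"
    by (rule zpI) (simp_all add: gmul_def zero_gm_def)
  show "a * g11 (PB b) + g11 (PB b) * a = 0"
    using arg_cong[OF e, of g11] by (simp add: jprod_def gmul_def)
  show "g22 (PA a) * b + b * g22 (PA a) = 0"
    using arg_cong[OF e, of g22] by (simp add: jprod_def gmul_def)
  show "rB G (g12 (PA a)) b + lA G a (g12 (PB b)) = 0"
    using arg_cong[OF e, of g12] by (simp add: jprod_def gmul_def)
  show "lB G b (g21 (PA a)) + rA G (g21 (PB b)) a = 0"
    using arg_cong[OF e, of g21] by (simp add: jprod_def gmul_def)
qed

lemma PB11[simp]: "g11 (PB b) = 0"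
  by (rule torA') (insert s1(1)[of 1 b], simp)
lemma PA22[simp]: "g22 (PA a) = 0"
  by (rule torB') (insert s1(2)[of a 1], simp)
lemma PB1_12: "g12 (PB 1) = - m0"
  using s1(3)[of 1 1] unfolding m0_def by (simp add: eq_neg_iff_add_eq_0 add.commute)
lemma PA12[simp]: "g12 (PA a) = lA G a m0"
  using s1(3)[of a 1] by (simp add: PB1_12 add_eq_0_iff2)
lemma PB12[simp]: "g12 (PB b) = - rB G m0 b"
  using s1(3)[of 1 b] by (simp add: eq_neg_iff_add_eq_0 add.commute)
lemma PA1_21: "g21 (PA 1) = - n0"
  using s1(4)[of 1 1] unfolding n0_def by (simp add: eq_neg_iff_add_eq_0)
lemma PA21[simp]: "g21 (PA a) = - rA G n0 a"
  using s1(4)[of 1 a] unfolding n0_def by (simp add: eq_neg_iff_add_eq_0)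
lemma PB21[simp]: "g21 (PB b) = lB G b n0"
  using s1(4)[of b 1] by (simp add: PA1_21 eq_neg_iff_add_eq_0 add.commute)

end


context L2 begin
lemma GMneg[simp]: "GM 0 (- x) 0 0 = - GM 0 x 0 0" "GM 0 0 (- y) 0 = - GM 0 0 y 0"
  by (simp_all add: uminus_gm_def)
lemma s2: "jprod G (PM x) (GM 0 y 0 0) = - jprod G (GM 0 x 0 0) (PM y)"
  by (rule eq_neg_iff_add_eq_0[THEN iffD2], rule zpI) (simp_all add: gmul_def zero_gm_def)
lemma s2n: "jprod G (PN x) (GM 0 0 y 0) = - jprod G (GM 0 0 x 0) (PN y)"
  by (rule eq_neg_iff_add_eq_0[THEN iffD2], rule zpI) (simp_all add: gmul_def zero_gm_def)
lemma s1m: "jprod G (PA a) (GM 0 0 0 b) = - jprod G (GM a 0 0 0) (PB b)"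
  by (rule eq_neg_iff_add_eq_0[THEN iffD2], rule zpI) (simp_all add: gmul_def zero_gm_def)
lemma s1n: "jprod G (PB b) (GM a 0 0 0) = - jprod G (GM 0 0 0 b) (PA a)"
  by (rule eq_neg_iff_add_eq_0[THEN iffD2], rule zpI) (simp_all add: gmul_def zero_gm_def)

lemma Rm: "jprod G (PA a) (GM 0 (- rB G m b) 0 0) + jprod G (GM a 0 0 0) (PM (- rB G m b))
   + jprod G (PM (lA G a m)) (GM 0 0 0 b) + jprod G (GM 0 (lA G a m) 0 0) (PB b) = 0"
proof -
  have e: "jprod G (phi (GM a 0 0 0 + GM 0 (lA G a m) 0 0)) (GM 0 0 0 b + GM 0 (- rB G m b) 0 0)
    + jprod G (GM a 0 0 0 + GM 0 (lA G a m) 0 0) (phi (GM 0 0 0 b + GM 0 (- rB G m b) 0 0)) = 0"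
    by (rule zpI) (simp_all add: gmul_def zero_gm_def plus_gm_def)
  from e show ?thesis by (simp add: phi_hom jprod_dist s1m s2 algebra_simps)
qed

lemma Rn: "jprod G (PB b) (GM 0 0 (- rA G n a) 0) + jprod G (GM 0 0 0 b) (PN (- rA G n a))
   + jprod G (PN (lB G b n)) (GM a 0 0 0) + jprod G (GM 0 0 (lB G b n) 0) (PA a) = 0"
proof -
  have e: "jprod G (phi (GM 0 0 0 b + GM 0 0 (lB G b n) 0)) (GM a 0 0 0 + GM 0 0 (- rA G n a) 0)
    + jprod G (GM 0 0 0 b + GM 0 0 (lB G b n) 0) (phi (GM a 0 0 0 + GM 0 0 (- rA G n a) 0)) = 0"
    by (rule zpI) (simp_all add: gmul_def zero_gm_def plus_gm_def)
  from e show ?thesis by (simp add: phi_hom jprod_dist s1n s2n algebra_simps)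
qed


lemmas Rm_c = Rm[THEN arg_cong[of _ _ g11], unfolded gm_comps(13)] Rm[THEN arg_cong[of _ _ g12], unfolded gm_comps(14)]
  Rm[THEN arg_cong[of _ _ g21], unfolded gm_comps(15)] Rm[THEN arg_cong[of _ _ g22], unfolded gm_comps(16)]
lemmas Rn_c = Rn[THEN arg_cong[of _ _ g11], unfolded gm_comps(13)] Rn[THEN arg_cong[of _ _ g12], unfolded gm_comps(14)]
  Rn[THEN arg_cong[of _ _ g21], unfolded gm_comps(15)] Rn[THEN arg_cong[of _ _ g22], unfolded gm_comps(16)]

lemma PM11[simp]: "g11 (PM m) = pMN G m n0"
proof -
  have "(pMN G m n0 - g11 (PM m)) + (pMN G m n0 - g11 (PM m)) = 0"
    using Rm_c(1)[of 1 m 1] by (simp add: jprod_def gmul_def phi_hom algebra_simps)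
  then have "pMN G m n0 - g11 (PM m) = 0" by (rule torA')
  then show ?thesis by simp
qed
lemma PM22[simp]: "g22 (PM m) = - pNM G n0 m"
proof -
  have "(pNM G n0 m + g22 (PM m)) + (pNM G n0 m + g22 (PM m)) = 0"
    using Rm_c(4)[of 1 m 1] by (simp add: jprod_def gmul_def phi_hom algebra_simps)
  then show ?thesis using torB' by (metis add.commute add_eq_0_iff2)
qed
lemma PN11[simp]: "g11 (PN n) = - pMN G m0 n"
proof -
  have "(pMN G m0 n + g11 (PN n)) + (pMN G m0 n + g11 (PN n)) = 0"
    using Rn_c(1)[of 1 n 1] by (simp add: jprod_def gmul_def phi_hom algebra_simps)
  then show ?thesis using torA' by (metis add.commute add_eq_0_iff2)
qed
lemma PN22[simp]: "g22 (PN n) = pNM G n m0"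
proof -
  have "(pNM G n m0 - g22 (PN n)) + (pNM G n m0 - g22 (PN n)) = 0"
    using Rn_c(4)[of 1 n 1] by (simp add: jprod_def gmul_def phi_hom algebra_simps)
  then have "pNM G n m0 - g22 (PN n) = 0" by (rule torB')
  then show ?thesis by simp
qed

lemma comm1: "lA G c1 m = rB G m c2"
  using Rm_c(2)[of 1 m 1] by (simp add: jprod_def gmul_def phi_hom algebra_simps c1_def c2_def)
lemma comm2: "rA G n c1 = lB G c2 n"
  using Rn_c(3)[of 1 n 1] by (simp add: jprod_def gmul_def phi_hom algebra_simps c1_def c2_def)

lemma lin1: "h = 0 \<Longrightarrow> p - q - h = 0 \<Longrightarrow> p = (q::'x::ab_group_add)" by simp
lemma lin2: "h = 0 \<Longrightarrow> p - q + h = 0 \<Longrightarrow> p = (q::'x::ab_group_add)" by simp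

definition "alpha a = g11 (PA a) - c1 * a"
definition "beta b = g22 (PB b) - c2 * b"
definition "mu m = g12 (PM m) - lA G c1 m"
definition "km m = g21 (PM m)"
definition "hn n = g12 (PN n)"
definition "nu n = g21 (PN n) - lB G c2 n"

lemmas kdefs = jprod_def gmul_def phi_hom alpha_def beta_def mu_def km_def hn_def nu_def
  c1_def[symmetric] c2_def[symmetric] comm1 comm2


lemma faithA: "(\<And>m. lA G a m = 0) \<Longrightarrow> a = 0" using faithful unfolding faithful_M_def by blast
lemma faithB: "(\<And>m. rB G m b = 0) \<Longrightarrow> b = 0" using faithful unfolding faithful_M_def by blast

lemma cenA: "c1 * a = a * c1"
proof -
  have "c1 * a - a * c1 = 0" by (rule faithA) (simp add: comm1)
  then show ?thesis by simp
qed
lemma cenB: "c2 * b = b * c2"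
proof -
  have "rB G (rB G m c2) b = rB G (rB G m b) c2" for m
  proof -
    have "rB G (rB G m c2) b = rB G (lA G c1 m) b" by (simp add: comm1)
    also have "\<dots> = lA G c1 (rB G m b)" by simp
    also have "\<dots> = rB G (rB G m b) c2" by (rule comm1)
    finally show ?thesis .
  qed
  then have "c2 * b - b * c2 = 0" by (intro faithB) simp
  then show ?thesis by simp
qed
lemma cenB': "lB G b (lB G c2 n) = lB G c2 (lB G b n)"
  by (metis ax(12) cenB)

lemma K1: "mu (lA G a m) = lA G (alpha a) m + lA G a (mu m)"
  by (rule lin1[OF Rm_c(2)[of a m 1]]) (simp add: kdefs algebra_simps)
lemma K2: "km (lA G a m) = rA G (km m) a"
  by (rule lin1[OF Rm_c(3)[of a m 1]]) (simp add: kdefs algebra_simps)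
lemma K3: "mu (rB G m b) = rB G (mu m) b + rB G m (beta b)"
  by (rule lin2[OF Rm_c(2)[of 1 m b]]) (simp add: kdefs algebra_simps)
lemma K4: "km (rB G m b) = lB G b (km m)"
  by (rule lin2[OF Rm_c(3)[of 1 m b]]) (simp add: kdefs algebra_simps)
lemma K5: "hn (rA G n a) = lA G a (hn n)"
  by (rule lin2[OF Rn_c(2)[of 1 n a]]) (simp add: kdefs algebra_simps)
lemma K6: "nu (rA G n a) = rA G (nu n) a + rA G n (alpha a)"
  by (rule lin2[OF Rn_c(3)[of 1 n a]]) (simp add: kdefs algebra_simps)
lemma K7: "hn (lB G b n) = rB G (hn n) b"
  by (rule lin1[OF Rn_c(2)[of b n 1]]) (simp add: kdefs algebra_simps)
lemma K8: "nu (lB G b n) = lB G (beta b) n + lB G b (nu n)"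
  by (rule lin1[OF Rn_c(3)[of b n 1]]) (simp add: kdefs cenB' algebra_simps)

end


context L2 begin

lemma GM_split: "GM a m n b = GM a 0 0 0 + GM 0 m 0 0 + GM 0 0 n 0 + GM 0 0 0 b"
  by (simp add: plus_gm_def)

lemma addA: "\<forall>x y. alpha (x + y) = alpha x + alpha y"
proof (intro allI)
  fix x y :: 'a
  have e: "GM (x + y) 0 0 0 = GM x 0 0 0 + GM y 0 0 0" by (simp add: plus_gm_def)
  have "phi (GM (x + y) 0 0 0) = PA x + PA y" by (simp only: e phi_hom(4))
  then show "alpha (x + y) = alpha x + alpha y"
    unfolding alpha_def by (simp add: algebra_simps)
qed
lemma addB: "\<forall>x y. beta (x + y) = beta x + beta y"
proof (intro allI)
  fix x y :: 'b
  have e: "GM 0 0 0 (x + y) = GM 0 0 0 x + GM 0 0 0 y" by (simp add: plus_gm_def)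
  have "phi (GM 0 0 0 (x + y)) = PB x + PB y" by (simp only: e phi_hom(4))
  then show "beta (x + y) = beta x + beta y"
    unfolding beta_def by (simp add: algebra_simps)
qed
lemma addM: "\<forall>x y. mu (x + y) = mu x + mu y" "\<forall>x y. km (x + y) = km x + km y"
proof (intro allI)
  fix x y :: 'm
  have e: "GM 0 (x + y) 0 0 = GM 0 x 0 0 + GM 0 y 0 0" by (simp add: plus_gm_def)
  have "phi (GM 0 (x + y) 0 0) = PM x + PM y" by (simp only: e phi_hom(4))
  then show "mu (x + y) = mu x + mu y"
    unfolding mu_def by (simp add: algebra_simps)
next
  show "\<forall>x y. km (x + y) = km x + km y"
  proof (intro allI)
  fix x y :: 'm
  have e: "GM 0 (x + y) 0 0 = GM 0 x 0 0 + GM 0 y 0 0" by (simp add: plus_gm_def)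
  have "phi (GM 0 (x + y) 0 0) = PM x + PM y" by (simp only: e phi_hom(4))
  then show "km (x + y) = km x + km y"
    unfolding km_def by (simp add: algebra_simps)
  qed
qed
lemma addN: "\<forall>x y. hn (x + y) = hn x + hn y" "\<forall>x y. nu (x + y) = nu x + nu y"
proof (intro allI)
  fix x y :: 'n
  have e: "GM 0 0 (x + y) 0 = GM 0 0 x 0 + GM 0 0 y 0" by (simp add: plus_gm_def)
  have "phi (GM 0 0 (x + y) 0) = PN x + PN y" by (simp only: e phi_hom(4))
  then show "hn (x + y) = hn x + hn y"
    unfolding hn_def by (simp add: algebra_simps)
next
  show "\<forall>x y. nu (x + y) = nu x + nu y"
  proof (intro allI)
  fix x y :: 'n
  have e: "GM 0 0 (x + y) 0 = GM 0 0 x 0 + GM 0 0 y 0" by (simp add: plus_gm_def)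
  have "phi (GM 0 0 (x + y) 0) = PN x + PN y" by (simp only: e phi_hom(4))
  then show "nu (x + y) = nu x + nu y"
    unfolding nu_def by (simp add: algebra_simps)
  qed
qed

lemmas homs[simp] = add_hom[OF addA] add_hom[OF addB] add_hom[OF addM(1)] add_hom[OF addM(2)]
  add_hom[OF addN(1)] add_hom[OF addN(2)]
lemmas homs2[simp] = addA[rule_format] addB[rule_format] addM[rule_format] addN[rule_format]

lemma alpha1[simp]: "alpha 1 = 0" by (simp add: alpha_def c1_def)
lemma beta1[simp]: "beta 1 = 0" by (simp add: beta_def c2_def)

lemma phiI: "phi gI = GM c1 0 0 c2"
proof -
  have e: "gI = GM 1 0 0 0 + GM 0 0 0 (1::'b)" by (simp add: gI_def plus_gm_def)
  have "phi gI = PA 1 + PB 1" by (simp only: e phi_hom(4))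
  then show ?thesis by (simp add: gm_eq c1_def[symmetric] c2_def[symmetric])
qed

lemma Tval: "T = GM 0 m0 n0 0"
  unfolding T_def gP1_def gP2_def by (simp add: gm_eq gmul_def)

lemma vphi_GM: "vphi (GM a m n b) = GM (alpha a) (mu m + hn n) (km m + nu n) (beta b)"
proof -
  have p: "phi (GM a m n b) = PA a + PM m + PN n + PB b"
    by (subst GM_split) (simp add: phi_hom)
  have v: "vphi (GM a m n b) = (PA a + PM m + PN n + PB b) - gmul G (GM c1 0 0 c2) (GM a m n b)
     + gcomm G (GM 0 m0 n0 0) (GM a m n b)"
    by (simp only: vphi_def[rule_format] p phiI Tval)
  show ?thesis unfolding v
    by (simp add: gm_eq phiI Tval gcomm_def gmul_def alpha_def beta_def mu_def km_def hn_def nu_def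
        comm1 comm2 algebra_simps)
qed

end


context L2 begin

lemma K9: "alpha (a * a') = alpha a * a' + a * alpha a'"
proof -
  have "lA G (alpha (a * a') - (alpha a * a' + a * alpha a')) m = 0" for m
  proof -
    have e1: "mu (lA G (a * a') m) = lA G (alpha (a * a')) m + lA G (a * a') (mu m)" by (rule K1)
    have e2: "mu (lA G a (lA G a' m)) = lA G (alpha a) (lA G a' m) + lA G a (mu (lA G a' m))" by (rule K1)
    have e3: "mu (lA G a' m) = lA G (alpha a') m + lA G a' (mu m)" by (rule K1)
    from e1 e2 e3 show ?thesis by (simp add: algebra_simps)
  qed
  then have "alpha (a * a') - (alpha a * a' + a * alpha a') = 0" by (rule faithA)
  then show ?thesis by simp
qed

lemma K10: "beta (b * b') = beta b * b' + b * beta b'"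
proof -
  have "rB G m (beta (b * b') - (beta b * b' + b * beta b')) = 0" for m
  proof -
    have e1: "mu (rB G m (b * b')) = rB G (mu m) (b * b') + rB G m (beta (b * b'))" by (rule K3)
    have e2: "mu (rB G (rB G m b) b') = rB G (mu (rB G m b)) b' + rB G (rB G m b) (beta b')" by (rule K3)
    have e3: "mu (rB G m b) = rB G (mu m) b + rB G m (beta b)" by (rule K3)
    from e1 e2 e3 show ?thesis by (simp add: algebra_simps)
  qed
  then have "beta (b * b') - (beta b * b' + b * beta b') = 0" by (rule faithB)
  then show ?thesis by simp
qed

lemma central: "gmul G (GM c1 0 0 c2) X = gmul G X (GM c1 0 0 c2)"
  by (simp add: gm_eq gmul_def cenA cenB comm1 comm2)

lemma vphi_eq: "vphi U = phi U - gmul G (GM c1 0 0 c2) U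
   + (gmul G (GM 0 m0 n0 0) U - gmul G U (GM 0 m0 n0 0))"
  using vphi_def phiI Tval unfolding gcomm_def by simp

lemma vzp:
  assumes uv: "gmul G U V = 0" and vu: "gmul G V U = 0"
  shows "jprod G (vphi U) V + jprod G U (vphi V) = 0"
proof -
  let ?C = "GM c1 0 0 c2 :: ('a, 'm, 'n, 'b) gm"
  have uvx: "gmul G U (gmul G V X) = 0" "gmul G V (gmul G U X) = 0" for X
    by (simp_all add: gmul_assoc[symmetric] uv vu gmul_dist)
  have cx: "gmul G U (gmul G ?C V) = gmul G ?C (gmul G U V)"
     "gmul G V (gmul G ?C U) = gmul G ?C (gmul G V U)"
    by (simp only: gmul_assoc[symmetric] central[of U], simp only: gmul_assoc[symmetric] central[of V])
  show ?thesis
    apply (rule lin1[OF zpI[OF uv vu], where q = 0])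
    apply (simp add: vphi_eq jprod_def gmul_dist gmul_assoc uv vu uvx cx algebra_simps)
    done
qed

lemma Z1: "pMN G m (km m) = 0" "pNM G (km m) m = 0"
proof -
  have e: "jprod G (PM m) (GM 0 m 0 0) + jprod G (GM 0 m 0 0) (PM m) = 0"
    by (rule zpI) (simp_all add: gmul_def zero_gm_def)
  have "pMN G m (km m) + pMN G m (km m) = 0"
    using arg_cong[OF e, of g11] by (simp add: jprod_def gmul_def km_def)
  then show "pMN G m (km m) = 0" by (rule torA')
  have "pNM G (km m) m + pNM G (km m) m = 0"
    using arg_cong[OF e, of g22] by (simp add: jprod_def gmul_def km_def)
  then show "pNM G (km m) m = 0" by (rule torB')
qed

lemma Z2: "pMN G (hn n) n = 0" "pNM G n (hn n) = 0"
proof -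
  have e: "jprod G (PN n) (GM 0 0 n 0) + jprod G (GM 0 0 n 0) (PN n) = 0"
    by (rule zpI) (simp_all add: gmul_def zero_gm_def)
  have "pMN G (hn n) n + pMN G (hn n) n = 0"
    using arg_cong[OF e, of g11] by (simp add: jprod_def gmul_def hn_def)
  then show "pMN G (hn n) n = 0" by (rule torA')
  have "pNM G n (hn n) + pNM G n (hn n) = 0"
    using arg_cong[OF e, of g22] by (simp add: jprod_def gmul_def hn_def)
  then show "pNM G n (hn n) = 0" by (rule torB')
qed

lemma K11: "alpha (pMN G m n) = pMN G (mu m) n + pMN G m (nu n)"
   and K12: "beta (pNM G n m) = pNM G n (mu m) + pNM G (nu n) m"
proof -
  let ?X = "GM 1 m n (pNM G n m)" and ?Y = "GM (pMN G m n) (- m) (- n) 1"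
  have e: "jprod G (vphi ?X) ?Y + jprod G ?X (vphi ?Y) = 0"
    by (rule vzp) (simp_all add: gm_eq gmul_def)
  have "(alpha (pMN G m n) - (pMN G (mu m) n + pMN G m (nu n))) +
        (alpha (pMN G m n) - (pMN G (mu m) n + pMN G m (nu n))) = 0"
    using arg_cong[OF e, of g11] by (simp add: jprod_def gmul_def vphi_GM Z1 Z2 algebra_simps)
  then have "alpha (pMN G m n) - (pMN G (mu m) n + pMN G m (nu n)) = 0" by (rule torA')
  then show "alpha (pMN G m n) = pMN G (mu m) n + pMN G m (nu n)" by simp
  have "(beta (pNM G n m) - (pNM G n (mu m) + pNM G (nu n) m)) +
        (beta (pNM G n m) - (pNM G n (mu m) + pNM G (nu n) m)) = 0"
    using arg_cong[OF e, of g22] by (simp add: jprod_def gmul_def vphi_GM Z1 Z2 algebra_simps)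
  then have "beta (pNM G n m) - (pNM G n (mu m) + pNM G (nu n) m) = 0" by (rule torB')
  then show "beta (pNM G n m) = pNM G n (mu m) + pNM G (nu n) m" by simp
qed

end


context L2 begin

lemma cor11: "corner G gP1 gP1 = range (\<lambda>a. GM a 0 0 0)"
proof (rule set_eqI)
  fix U
  show "U \<in> corner G gP1 gP1 \<longleftrightarrow> U \<in> range (\<lambda>a. GM a 0 0 0)"
  proof
    assume "U \<in> corner G gP1 gP1"
    then show "U \<in> range (\<lambda>a. GM a 0 0 0)" unfolding corner_def gP1_def gP2_def
      by (auto simp: gmul_def)
  next
    assume "U \<in> range (\<lambda>a. GM a 0 0 0)"
    then obtain a where u: "U = GM a 0 0 0" by blast
    then have "U = gmul G (gmul G gP1 U) gP1" by (simp add: gmul_def gP1_def gP2_def)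
    then show "U \<in> corner G gP1 gP1" unfolding corner_def by blast
  qed
qed
lemma cor12: "corner G gP1 gP2 = range (\<lambda>a. GM 0 a 0 0)"
proof (rule set_eqI)
  fix U
  show "U \<in> corner G gP1 gP2 \<longleftrightarrow> U \<in> range (\<lambda>a. GM 0 a 0 0)"
  proof
    assume "U \<in> corner G gP1 gP2"
    then show "U \<in> range (\<lambda>a. GM 0 a 0 0)" unfolding corner_def gP1_def gP2_def
      by (auto simp: gmul_def)
  next
    assume "U \<in> range (\<lambda>a. GM 0 a 0 0)"
    then obtain a where u: "U = GM 0 a 0 0" by blast
    then have "U = gmul G (gmul G gP1 U) gP2" by (simp add: gmul_def gP1_def gP2_def)
    then show "U \<in> corner G gP1 gP2" unfolding corner_def by blast
  qed
qed
lemma cor21: "corner G gP2 gP1 = range (\<lambda>a. GM 0 0 a 0)"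
proof (rule set_eqI)
  fix U
  show "U \<in> corner G gP2 gP1 \<longleftrightarrow> U \<in> range (\<lambda>a. GM 0 0 a 0)"
  proof
    assume "U \<in> corner G gP2 gP1"
    then show "U \<in> range (\<lambda>a. GM 0 0 a 0)" unfolding corner_def gP1_def gP2_def
      by (auto simp: gmul_def)
  next
    assume "U \<in> range (\<lambda>a. GM 0 0 a 0)"
    then obtain a where u: "U = GM 0 0 a 0" by blast
    then have "U = gmul G (gmul G gP2 U) gP1" by (simp add: gmul_def gP1_def gP2_def)
    then show "U \<in> corner G gP2 gP1" unfolding corner_def by blast
  qed
qed
lemma cor22: "corner G gP2 gP2 = range (\<lambda>a. GM 0 0 0 a)"
proof (rule set_eqI)
  fix U
  show "U \<in> corner G gP2 gP2 \<longleftrightarrow> U \<in> range (\<lambda>a. GM 0 0 0 a)"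
  proof
    assume "U \<in> corner G gP2 gP2"
    then show "U \<in> range (\<lambda>a. GM 0 0 0 a)" unfolding corner_def gP1_def gP2_def
      by (auto simp: gmul_def)
  next
    assume "U \<in> range (\<lambda>a. GM 0 0 0 a)"
    then obtain a where u: "U = GM 0 0 0 a" by blast
    then have "U = gmul G (gmul G gP2 U) gP2" by (simp add: gmul_def gP1_def gP2_def)
    then show "U \<in> corner G gP2 gP2" unfolding corner_def by blast
  qed
qed

lemma GM_plus: "GM a m n b + GM a' m' n' b' = GM (a + a') (m + m') (n + n') (b + b')"
  by (simp add: plus_gm_def)

lemmas fin = GM_plus jprod_def gmul_def vphi_GM gm_eq K1 K2 K3 K4 K5 K6 K7 K8 K9 K10 K11 K12

lemma main:
   "(\<forall>U\<in>corner G gP1 gP1. \<forall>V\<in>corner G gP1 gP2.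
       vphi (jprod G U V) = jprod G (vphi U) V + jprod G U (vphi V)) \<and>
    (\<forall>U\<in>corner G gP2 gP2. \<forall>V\<in>corner G gP2 gP1.
       vphi (jprod G U V) = jprod G (vphi U) V + jprod G U (vphi V)) \<and>
    (\<forall>U\<in>corner G gP1 gP1. \<forall>V\<in>corner G gP2 gP1.
       vphi (jprod G U V) = jprod G (vphi U) V + jprod G U (vphi V)) \<and>
    (\<forall>U\<in>corner G gP2 gP2. \<forall>V\<in>corner G gP1 gP2.
       vphi (jprod G U V) = jprod G (vphi U) V + jprod G U (vphi V)) \<and>
    (\<forall>U\<in>corner G gP1 gP1. \<forall>V\<in>corner G gP1 gP1.
       vphi (jprod G U V) = jprod G (vphi U) V + jprod G U (vphi V)) \<and>
    (\<forall>U\<in>corner G gP2 gP2. \<forall>V\<in>corner G gP2 gP2.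
       vphi (jprod G U V) = jprod G (vphi U) V + jprod G U (vphi V)) \<and>
    (\<forall>U\<in>corner G gP1 gP2. \<forall>V\<in>corner G gP2 gP1.
       vphi (jprod G U V) = jprod G (vphi U) V + jprod G U (vphi V)) \<and>
    (\<forall>U\<in>corner G gP2 gP1. \<forall>V\<in>corner G gP1 gP2.
       vphi (jprod G U V) = jprod G (vphi U) V + jprod G U (vphi V))"
  unfolding cor11 cor12 cor21 cor22
  by (simp add: fin algebra_simps)

end



theorem lemma2p6:
  fixes G :: "('a::ring_1, 'b::ring_1, 'm::ab_group_add, 'n::ab_group_add) gmr_ops"
    and phi :: "('a, 'm, 'n, 'b) gm \<Rightarrow> ('a, 'm, 'n, 'b) gm"
    and T :: "('a, 'm, 'n, 'b) gm"
    and vphi :: "('a, 'm, 'n, 'b) gm \<Rightarrow> ('a, 'm, 'n, 'b) gm"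
  assumes gmr: "gen_matrix_ring G"
    and faithful: "faithful_M G"
    and torA: "two_torsion_free TYPE('a)"
    and torB: "two_torsion_free TYPE('b)"
    and additive: "\<forall>X Y. phi (X + Y) = phi X + phi Y"
    and zp: "\<forall>U V. gmul G U V = 0 \<and> gmul G V U = 0 \<longrightarrow>
                 jprod G (phi U) V + jprod G U (phi V) = 0"
    and T_def: "T = gmul G (gmul G gP1 (phi gP1)) gP2 + gmul G (gmul G gP2 (phi gP2)) gP1"
    and vphi_def: "\<forall>U. vphi U = phi U - gmul G (phi gI) U + gcomm G T U"
  shows
   "(\<forall>U\<in>corner G gP1 gP1. \<forall>V\<in>corner G gP1 gP2.
       vphi (jprod G U V) = jprod G (vphi U) V + jprod G U (vphi V)) \<and>
    (\<forall>U\<in>corner G gP2 gP2. \<forall>V\<in>corner G gP2 gP1.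
       vphi (jprod G U V) = jprod G (vphi U) V + jprod G U (vphi V)) \<and>
    (\<forall>U\<in>corner G gP1 gP1. \<forall>V\<in>corner G gP2 gP1.
       vphi (jprod G U V) = jprod G (vphi U) V + jprod G U (vphi V)) \<and>
    (\<forall>U\<in>corner G gP2 gP2. \<forall>V\<in>corner G gP1 gP2.
       vphi (jprod G U V) = jprod G (vphi U) V + jprod G U (vphi V)) \<and>
    (\<forall>U\<in>corner G gP1 gP1. \<forall>V\<in>corner G gP1 gP1.
       vphi (jprod G U V) = jprod G (vphi U) V + jprod G U (vphi V)) \<and>
    (\<forall>U\<in>corner G gP2 gP2. \<forall>V\<in>corner G gP2 gP2.
       vphi (jprod G U V) = jprod G (vphi U) V + jprod G U (vphi V)) \<and>
    (\<forall>U\<in>corner G gP1 gP2. \<forall>V\<in>corner G gP2 gP1.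
       vphi (jprod G U V) = jprod G (vphi U) V + jprod G U (vphi V)) \<and>
    (\<forall>U\<in>corner G gP2 gP1. \<forall>V\<in>corner G gP1 gP2.
       vphi (jprod G U V) = jprod G (vphi U) V + jprod G U (vphi V))"
proof -
  interpret L2 G phi T vphi
    by (intro L2.intro L.intro L2_axioms.intro) (rule assms)+
  show ?thesis by (rule main)
qed

end
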